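(* Let $R>0$ and $\gamma>1$. For admissible states (density $\rho>0$, temperature $T>0$, velocity $V=(V_1,V_2,V_3)$), let $u=(\rho,\rho V_1,\rho V_2,\rho V_3,\rho E)^T$ with $E=\frac{R}{\gamma-1}T+\frac12|V|^2$. For two admissible states $L,R$ and auxiliary variables $Z=(Z_1,\dots,Z_5)$ depending on the state, write $$\overline{Z_k}=\tfrac12(Z_{k,L}+Z_{k,R}),\qquad \overline{Z_k}_{\log}=\frac{Z_{k,R}-Z_{k,L}}{\log Z_{k,R}-\log Z_{k,L}}$$ (with $\overline{Z_k}_{\log}=Z_{k,L}$ when $Z_{k,L}=Z_{k,R}$). Also write $\overline{Z_k^2}=\frac12(Z_{k,L}^2+Z_{k,R}^2)$. Define two two-point functions as follows. (i) With $Z=\bigl(1/\sqrt T,\;V_1/\sqrt T,\;V_2/\sqrt T,\;V_3/\sqrt T,\;\rho\sqrt T\bigr)$: $$U_1^{sc}(u_L,u_R)=\begin{pmatrix}\overline{Z_5}_{\log}\overline{Z_1}\\ \overline{Z_5}_{\log}\overline{Z_2}\\ \overline{Z_5}_{\log}\overline{Z_3}\\ \overline{Z_5}_{\log}\overline{Z_4}\\ \tfrac12\overline{Z_5}_{\log}\Bigl(\frac{R(\gamma+1)}{(\gamma-1)\overline{Z_1}_{\log}}+\frac{1}{\overline{Z_1}}\bigl(\overline{Z_2}^2+\overline{Z_3}^2+\overline{Z_4}^2-R\,\overline{Z_5}/\overline{Z_5}_{\log}\bigr)\Bigr)\end{pmatrix}.$$ (ii) With $Z=(\rho,V_1,V_2,V_3,1/T)$: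 $$U_2^{sc}(u_L,u_R)=\begin{pmatrix}\overline{Z_1}_{\log}\\ \overline{Z_1}_{\log}\overline{Z_2}\\ \overline{Z_1}_{\log}\overline{Z_3}\\ \overline{Z_1}_{\log}\overline{Z_4}\\ \overline{Z_1}_{\log}\Bigl(\frac{R}{(\gamma-1)\overline{Z_5}_{\log}}+\overline{Z_2}^2+\overline{Z_3}^2+\overline{Z_4}^2-\tfrac12\bigl(\overline{Z_2^2}+\overline{Z_3^2}+\overline{Z_4^2}\bigr)\Bigr)\end{pmatrix}.$$ Then each of $U^{sc}=U_1^{sc}$ and $U^{sc}=U_2^{sc}$ has the following properties: - it is symmetric: $U^{sc}(u_L,u_R)=U^{sc}(u_R,u_L)$; - it is consistent: $U^{sc}(u,u)=u$; - it satisfies the shuffle condition $$\bigl(w(u_L)-w(u_R)\bigr)^TU^{sc}(u_L,u_R)=\bigl[w(u_L)^Tu_L-\mathcal S(u_L)\bigr]-\bigl[w(u_R)^Tu_R-\mathcal S(u_R)\bigr].$$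
   Context: Set $c_p=\gamma R/(\gamma-1)$ and specific enthalpy $h=c_pT$. The thermodynamic entropy is $s=\frac{R}{\gamma-1}\log(T/T_\infty)-R\log(\rho/\rho_\infty)$ with fixed reference constants $T_\infty,\rho_\infty>0$. The mathematical entropy is $\mathcal S(u)=-\rho s$. The entropy variables are $$w(u)=\Bigl(\frac{\partial\mathcal S}{\partial u}\Bigr)^T=\Bigl(\frac hT-s-\frac{|V|^2}{2T},\;\frac{V_1}{T},\;\frac{V_2}{T},\;\frac{V_3}{T},\;-\frac1T\Bigr)^T.$$ Notation: $\overline{Z_k}^2$ denotes the square of the arithmetic mean, while $\overline{Z_k^2}$ denotes the arithmetic mean of the squares. *)

theory Defs
  imports "HOL-Analysis.Analysis"
begin

record prim =
  rho :: real
  v1 :: real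
  v2 :: real
  v3 :: real
  temp :: real

definition admissible :: "prim \<Rightarrow> bool" where
  "admissible p \<longleftrightarrow> rho p > 0 \<and> temp p > 0"

definition vsq :: "prim \<Rightarrow> real" where
  "vsq p = (v1 p)\<^sup>2 + (v2 p)\<^sup>2 + (v3 p)\<^sup>2"

definition energy :: "real \<Rightarrow> real \<Rightarrow> prim \<Rightarrow> real" where
  "energy Rg \<gamma> p = Rg / (\<gamma> - 1) * temp p + vsq p / 2"

definition cons :: "real \<Rightarrow> real \<Rightarrow> prim \<Rightarrow> real^5" where
  "cons Rg \<gamma> p = vector [rho p, rho p * v1 p, rho p * v2 p, rho p * v3 p,
                          rho p * energy Rg \<gamma> p]"

definition cp :: "real \<Rightarrow> real \<Rightarrow> real" where
  "cp Rg \<gamma> = \<gamma> * Rg / (\<gamma> - 1)"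

definition enthalpy :: "real \<Rightarrow> real \<Rightarrow> prim \<Rightarrow> real" where
  "enthalpy Rg \<gamma> p = cp Rg \<gamma> * temp p"

definition thermo_entropy :: "real \<Rightarrow> real \<Rightarrow> real \<Rightarrow> real \<Rightarrow> prim \<Rightarrow> real" where
  "thermo_entropy Rg \<gamma> Tinf rhoinf p =
     Rg / (\<gamma> - 1) * ln (temp p / Tinf) - Rg * ln (rho p / rhoinf)"

definition math_entropy :: "real \<Rightarrow> real \<Rightarrow> real \<Rightarrow> real \<Rightarrow> prim \<Rightarrow> real" where
  "math_entropy Rg \<gamma> Tinf rhoinf p = - rho p * thermo_entropy Rg \<gamma> Tinf rhoinf p"

definition entvar :: "real \<Rightarrow> real \<Rightarrow> real \<Rightarrow> real \<Rightarrow> prim \<Rightarrow> real^5" where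
  "entvar Rg \<gamma> Tinf rhoinf p = vector
     [enthalpy Rg \<gamma> p / temp p - thermo_entropy Rg \<gamma> Tinf rhoinf p - vsq p / (2 * temp p),
      v1 p / temp p, v2 p / temp p, v3 p / temp p, - 1 / temp p]"

definition amean :: "real \<Rightarrow> real \<Rightarrow> real" where
  "amean a b = (a + b) / 2"

definition logmean :: "real \<Rightarrow> real \<Rightarrow> real" where
  "logmean a b = (if a = b then a else (b - a) / (ln b - ln a))"

definition sqmean :: "real \<Rightarrow> real \<Rightarrow> real" where
  "sqmean a b = (a\<^sup>2 + b\<^sup>2) / 2"

definition U1 :: "real \<Rightarrow> real \<Rightarrow> prim \<Rightarrow> prim \<Rightarrow> real^5" where
  "U1 Rg \<gamma> L R =
    (let Z1 = (\<lambda>p. 1 / sqrt (temp p));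
         Z2 = (\<lambda>p. v1 p / sqrt (temp p));
         Z3 = (\<lambda>p. v2 p / sqrt (temp p));
         Z4 = (\<lambda>p. v3 p / sqrt (temp p));
         Z5 = (\<lambda>p. rho p * sqrt (temp p));
         m1 = amean (Z1 L) (Z1 R); m2 = amean (Z2 L) (Z2 R);
         m3 = amean (Z3 L) (Z3 R); m4 = amean (Z4 L) (Z4 R);
         m5 = amean (Z5 L) (Z5 R);
         l1 = logmean (Z1 L) (Z1 R); l5 = logmean (Z5 L) (Z5 R)
     in vector [l5 * m1, l5 * m2, l5 * m3, l5 * m4,
                1/2 * l5 * (Rg * (\<gamma> + 1) / ((\<gamma> - 1) * l1)
                   + 1 / m1 * (m2\<^sup>2 + m3\<^sup>2 + m4\<^sup>2 - Rg * m5 / l5))])"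

definition U2 :: "real \<Rightarrow> real \<Rightarrow> prim \<Rightarrow> prim \<Rightarrow> real^5" where
  "U2 Rg \<gamma> L R =
    (let Z1 = rho; Z2 = v1; Z3 = v2; Z4 = v3; Z5 = (\<lambda>p. 1 / temp p);
         m2 = amean (Z2 L) (Z2 R); m3 = amean (Z3 L) (Z3 R); m4 = amean (Z4 L) (Z4 R);
         q2 = sqmean (Z2 L) (Z2 R); q3 = sqmean (Z3 L) (Z3 R); q4 = sqmean (Z4 L) (Z4 R);
         l1 = logmean (Z1 L) (Z1 R); l5 = logmean (Z5 L) (Z5 R)
     in vector [l1, l1 * m2, l1 * m3, l1 * m4,
                l1 * (Rg / ((\<gamma> - 1) * l5) + m2\<^sup>2 + m3\<^sup>2 + m4\<^sup>2 - 1/2 * (q2 + q3 + q4))])"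

definition ec_properties ::
  "real \<Rightarrow> real \<Rightarrow> real \<Rightarrow> real \<Rightarrow> (prim \<Rightarrow> prim \<Rightarrow> real^5) \<Rightarrow> bool" where
  "ec_properties Rg \<gamma> Tinf rhoinf U \<longleftrightarrow>
     (\<forall>L R. admissible L \<longrightarrow> admissible R \<longrightarrow> U L R = U R L) \<and>
     (\<forall>p. admissible p \<longrightarrow> U p p = cons Rg \<gamma> p) \<and>
     (\<forall>L R. admissible L \<longrightarrow> admissible R \<longrightarrow>
        (entvar Rg \<gamma> Tinf rhoinf L - entvar Rg \<gamma> Tinf rhoinf R) \<bullet> U L R =
          (entvar Rg \<gamma> Tinf rhoinf L \<bullet> cons Rg \<gamma> L - math_entropy Rg \<gamma> Tinf rhoinf L)
        - (entvar Rg \<gamma> Tinf rhoinf R \<bullet> cons Rg \<gamma> R - math_entropy Rg \<gamma> Tinf rhoinf R))"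

end

theory Submission
  imports Defs
begin
lemma exhaust_5:
  fixes x :: 5
  shows "x = 1 \<or> x = 2 \<or> x = 3 \<or> x = 4 \<or> x = 5"
proof (induct x)
  case (of_int z)
  then have "z = 0 \<or> z = 1 \<or> z = 2 \<or> z = 3 \<or> z = 4" by fastforce
  then show ?case by auto
qed
lemma UNIV_5: "UNIV = {1, 2, 3, 4, 5::5}"
  using exhaust_5 by auto
lemma sum_5: "sum f (UNIV::5 set) = f 1 + f 2 + f 3 + f 4 + f 5"
  unfolding UNIV_5 by (simp add: ac_simps)
lemma vector_5 [simp]:
 "(vector [a,b,c,d,e] ::('a::zero)^5)$1 = a"
 "(vector [a,b,c,d,e] ::('a::zero)^5)$2 = b"
 "(vector [a,b,c,d,e] ::('a::zero)^5)$3 = c"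
 "(vector [a,b,c,d,e] ::('a::zero)^5)$4 = d"
 "(vector [a,b,c,d,e] ::('a::zero)^5)$5 = e"
  unfolding vector_def by simp_all
lemma vec5_eq: "(x::'a^5) = y \<longleftrightarrow> x$1=y$1 \<and> x$2=y$2 \<and> x$3=y$3 \<and> x$4=y$4 \<and> x$5=y$5"
proof -
  have f: "\<And>P. (\<forall>i::5. P i) \<longleftrightarrow> P 1 \<and> P 2 \<and> P 3 \<and> P 4 \<and> P 5" by (metis exhaust_5)
  show ?thesis unfolding vec_eq_iff f ..
qed
lemma inner5: "(x::real^5) \<bullet> y = x$1*y$1 + x$2*y$2 + x$3*y$3 + x$4*y$4 + x$5*y$5"
  by (simp add: inner_vec_def sum_5)
lemma logmean_sym: "a>0 \<Longrightarrow> b>0 \<Longrightarrow> logmean a b = logmean b a"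
  by (simp add: logmean_def) (metis minus_diff_eq minus_divide_divide)
lemma logmean_pos: "a>0 \<Longrightarrow> b>0 \<Longrightarrow> logmean a b > 0"
proof -
  assume a: "a>0" "b>0"
  show ?thesis
  proof (cases "a < b")
    case True
    then have "ln a < ln b" using a by simp
    then show ?thesis using True unfolding logmean_def by simp
  next
    case False
    show ?thesis
    proof (cases "a = b")
      case True then show ?thesis using a unfolding logmean_def by simp
    next
      case False
      then have "b < a" using \<open>\<not> a < b\<close> by simp
      then have "ln b < ln a" using a by simp
      then show ?thesis using \<open>b < a\<close> unfolding logmean_def by (simp add: divide_neg_neg)
    qed
  qed
qed
lemma logmean_key: "a>0 \<Longrightarrow> b>0 \<Longrightarrow> logmean a b * (ln a - ln b) = a - b"
proof -
  assume a: "a>0" "b>0"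
  show ?thesis
  proof (cases "a = b")
    case False
    then have "ln b \<noteq> ln a" using a by simp
    then show ?thesis using False unfolding logmean_def by (simp add: field_simps)
  qed (simp add: logmean_def)
qed

lemma U1_alg:
  fixes a b p q l1 l5 K Rg A B x1 x2 x3 y1 y2 y3 :: real
  assumes "a > 0" "b > 0" "l1 > 0" "l5 > 0"
    and k1: "l1 * (ln a - ln b) = a - b" and k5: "l5 * (ln p - ln q) = p - q"
  shows "(Rg + K - (K*(-2*ln a - A) - Rg*(ln a + ln p - B)) - (x1\<^sup>2+x2\<^sup>2+x3\<^sup>2)/2
          - (Rg + K - (K*(-2*ln b - A) - Rg*(ln b + ln q - B)) - (y1\<^sup>2+y2\<^sup>2+y3\<^sup>2)/2))
          * (l5 * ((a+b)/2))
       + (x1*a - y1*b) * (l5 * ((x1+y1)/2))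
       + (x2*a - y2*b) * (l5 * ((x2+y2)/2))
       + (x3*a - y3*b) * (l5 * ((x3+y3)/2))
       + (-(a\<^sup>2) - -(b\<^sup>2)) * (1/2 * l5 * ((Rg + 2*K)/l1 + 1/((a+b)/2) *
            (((x1+y1)/2)\<^sup>2 + ((x2+y2)/2)\<^sup>2 + ((x3+y3)/2)\<^sup>2 - Rg * ((p+q)/2) / l5)))
       = Rg * (a*p - b*q)"
proof -
  have la: "ln a = ln b + (a - b)/l1" using k1 assms(3) by (simp add: field_simps)
  have lp: "ln p = ln q + (p - q)/l5" using k5 assms(4) by (simp add: field_simps)
  have ab: "a + b > 0" using assms by simp
  have e1: "\<And>X Y. (-(a\<^sup>2) - -(b\<^sup>2)) * (1/2 * l5 * (X + 1/((a+b)/2) * Y)) = -(a-b)*l5*((a+b)/2)*X - (a-b)*l5*Y"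
    using ab by (simp add: field_simps power2_eq_square)
  have e2: "Rg * ((p+q)/2) / l5 * l5 = Rg * ((p+q)/2)" using assms(4) by simp
  show ?thesis unfolding e1 la lp using assms(3,4)
    by (simp add: field_simps power2_eq_square)
qed

lemma wu_S:
  assumes "\<gamma> > 1" "Tinf > 0" "rhoinf > 0" "admissible p"
  shows "entvar Rg \<gamma> Tinf rhoinf p \<bullet> cons Rg \<gamma> p - math_entropy Rg \<gamma> Tinf rhoinf p = Rg * rho p"
proof -
  have pos: "rho p > 0" "temp p > 0" using assms(4) by (auto simp: admissible_def)
  obtain g where gg: "\<gamma> = g + 1" "g \<noteq> 0" using assms(1) by (intro that[of "\<gamma> - 1"]) auto
  show ?thesis
    unfolding inner5 entvar_def cons_def math_entropy_def enthalpy_def cp_def energy_def vsq_def gg(1)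
    using pos gg(2) by (simp add: field_simps power2_eq_square)
qed

lemma entvar_Z:
  assumes "\<gamma> > 1" "Tinf > 0" "rhoinf > 0" "admissible p"
  shows "entvar Rg \<gamma> Tinf rhoinf p = vector
     [Rg + Rg/(\<gamma>-1) - (Rg/(\<gamma>-1)*(-2*ln (1/sqrt (temp p)) - ln Tinf) - Rg*(ln (1/sqrt (temp p)) + ln (rho p * sqrt (temp p)) - ln rhoinf))
        - ((v1 p/sqrt (temp p))\<^sup>2+(v2 p/sqrt (temp p))\<^sup>2+(v3 p/sqrt (temp p))\<^sup>2)/2,
      v1 p/sqrt (temp p) * (1/sqrt (temp p)), v2 p/sqrt (temp p) * (1/sqrt (temp p)), v3 p/sqrt (temp p) * (1/sqrt (temp p)),
      -((1/sqrt (temp p))\<^sup>2)]"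
proof -
  have pos: "rho p > 0" "temp p > 0" using assms(4) by (auto simp: admissible_def)
  obtain g where gg: "\<gamma> = g + 1" "g \<noteq> 0" using assms(1) by (intro that[of "\<gamma> - 1"]) auto
  have s: "sqrt (temp p) > 0" "(sqrt (temp p))\<^sup>2 = temp p" "sqrt (temp p) * sqrt (temp p) = temp p" using pos by auto
  show ?thesis
    unfolding vec5_eq entvar_def thermo_entropy_def enthalpy_def cp_def vsq_def vector_5 gg(1)
    using pos gg(2) s assms(2,3)
    by (simp add: ln_div ln_mult ln_sqrt power_divide field_simps)
qed

lemma U1_alg2:
  fixes a b p q l1 l5 \<gamma> Rg A B x1 x2 x3 y1 y2 y3 :: real
  assumes "a > 0" "b > 0" "l1 > 0" "l5 > 0" "\<gamma> > 1"
    and k1: "l1 * (ln a - ln b) = a - b" and k5: "l5 * (ln p - ln q) = p - q"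
  shows "(Rg + Rg/(\<gamma>-1) - (Rg/(\<gamma>-1)*(-2*ln a - A) - Rg*(ln a + ln p - B)) - (x1\<^sup>2+x2\<^sup>2+x3\<^sup>2)/2
          - (Rg + Rg/(\<gamma>-1) - (Rg/(\<gamma>-1)*(-2*ln b - A) - Rg*(ln b + ln q - B)) - (y1\<^sup>2+y2\<^sup>2+y3\<^sup>2)/2))
          * (l5 * ((a+b)/2))
       + (x1*a - y1*b) * (l5 * ((x1+y1)/2))
       + (x2*a - y2*b) * (l5 * ((x2+y2)/2))
       + (x3*a - y3*b) * (l5 * ((x3+y3)/2))
       + (-(a\<^sup>2) - -(b\<^sup>2)) * (1/2 * l5 * (Rg * (\<gamma> + 1) / ((\<gamma> - 1) * l1) + 1/((a+b)/2) *
            (((x1+y1)/2)\<^sup>2 + ((x2+y2)/2)\<^sup>2 + ((x3+y3)/2)\<^sup>2 - Rg * ((p+q)/2) / l5)))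
       = Rg * (a*p - b*q)"
proof -
  have e: "Rg * (\<gamma> + 1) / ((\<gamma> - 1) * l1) = (Rg + 2*(Rg/(\<gamma>-1)))/l1"
    using assms(3,5) by (simp add: field_simps)
  show ?thesis unfolding e by (rule U1_alg[OF assms(1-4) k1 k5])
qed

lemma U1_shuffle:
  assumes "Rg > 0" "\<gamma> > 1" "Tinf > 0" "rhoinf > 0" "admissible L" "admissible R"
  shows "(entvar Rg \<gamma> Tinf rhoinf L - entvar Rg \<gamma> Tinf rhoinf R) \<bullet> U1 Rg \<gamma> L R =
          (entvar Rg \<gamma> Tinf rhoinf L \<bullet> cons Rg \<gamma> L - math_entropy Rg \<gamma> Tinf rhoinf L)
        - (entvar Rg \<gamma> Tinf rhoinf R \<bullet> cons Rg \<gamma> R - math_entropy Rg \<gamma> Tinf rhoinf R)"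
proof -
  have pos: "rho L > 0" "rho R > 0" "temp L > 0" "temp R > 0" using assms(5,6) by (auto simp: admissible_def)
  have a: "1 / sqrt (temp L) > 0" "1 / sqrt (temp R) > 0" "rho L * sqrt (temp L) > 0" "rho R * sqrt (temp R) > 0"
    using pos by auto
  have rr: "rho L = 1 / sqrt (temp L) * (rho L * sqrt (temp L))" "rho R = 1 / sqrt (temp R) * (rho R * sqrt (temp R))"
    using pos by auto
  have main: "(entvar Rg \<gamma> Tinf rhoinf L - entvar Rg \<gamma> Tinf rhoinf R) \<bullet> U1 Rg \<gamma> L R
     = Rg * (1 / sqrt (temp L) * (rho L * sqrt (temp L)) - 1 / sqrt (temp R) * (rho R * sqrt (temp R)))"
    unfolding entvar_Z[OF assms(2-4,5)] entvar_Z[OF assms(2-4,6)] U1_def Let_def amean_def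
    apply (simp only: inner5 vector_minus_component vector_5)
    apply (rule U1_alg2)
    using a assms(2) by (auto intro: logmean_pos logmean_key)
  show ?thesis unfolding wu_S[OF assms(2-4,5)] wu_S[OF assms(2-4,6)] main rr(1)[symmetric] rr(2)[symmetric] by (simp add: algebra_simps)
qed


lemma U2_alg:
  fixes r1 r2 b1 b2 lr lb \<gamma> Rg A B x1 x2 x3 y1 y2 y3 :: real
  assumes "lr > 0" "lb > 0" "\<gamma> > 1"
    and k1: "lr * (ln r1 - ln r2) = r1 - r2" and k5: "lb * (ln b1 - ln b2) = b1 - b2"
  shows "(Rg + Rg/(\<gamma>-1) - (Rg/(\<gamma>-1)*(-ln b1 - A) - Rg*(ln r1 - B)) - (x1\<^sup>2+x2\<^sup>2+x3\<^sup>2)*b1/2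
          - (Rg + Rg/(\<gamma>-1) - (Rg/(\<gamma>-1)*(-ln b2 - A) - Rg*(ln r2 - B)) - (y1\<^sup>2+y2\<^sup>2+y3\<^sup>2)*b2/2))
          * lr
       + (x1*b1 - y1*b2) * (lr * ((x1+y1)/2))
       + (x2*b1 - y2*b2) * (lr * ((x2+y2)/2))
       + (x3*b1 - y3*b2) * (lr * ((x3+y3)/2))
       + (-b1 - -b2) * (lr * (Rg / ((\<gamma> - 1) * lb) + ((x1+y1)/2)\<^sup>2 + ((x2+y2)/2)\<^sup>2 + ((x3+y3)/2)\<^sup>2
            - 1/2 * ((x1\<^sup>2+y1\<^sup>2)/2 + (x2\<^sup>2+y2\<^sup>2)/2 + (x3\<^sup>2+y3\<^sup>2)/2)))
       = Rg * (r1 - r2)"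
proof -
  define K where "K = Rg/(\<gamma>-1)"
  have e: "Rg / ((\<gamma> - 1) * lb) = K / lb" unfolding K_def using assms(2,3) by (simp add: field_simps)
  have la: "ln r1 = ln r2 + (r1 - r2)/lr" using k1 assms(1) by (simp add: field_simps)
  have lp: "ln b1 = ln b2 + (b1 - b2)/lb" using k5 assms(2) by (simp add: field_simps)
  have e3: "(-b1 - -b2) * (lr * (K / lb + X)) = - lr * K * ((b1 - b2) / lb) - (b1 - b2) * lr * X" for X
    by (simp add: algebra_simps)
  have e4: "(Rg + K - (K * (- (ln b2 + (b1 - b2) / lb) - A) - Rg * (ln r2 + (r1 - r2) / lr - B)) - Y1 -
          (Rg + K - (K * (- ln b2 - A) - Rg * (ln r2 - B)) - Y2)) * lr
        = K * ((b1 - b2) / lb) * lr + Rg * (r1 - r2) - (Y1 - Y2) * lr" for Y1 Y2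
    using assms(1) by (simp add: field_simps)
  show ?thesis unfolding e K_def[symmetric] la lp add.assoc[symmetric] e3 e4 using assms(1,2)
    by (simp add: field_simps power2_eq_square)
qed

lemma entvar_Z2:
  assumes "\<gamma> > 1" "Tinf > 0" "rhoinf > 0" "admissible p"
  shows "entvar Rg \<gamma> Tinf rhoinf p = vector
     [Rg + Rg/(\<gamma>-1) - (Rg/(\<gamma>-1)*(-ln (1/temp p) - ln Tinf) - Rg*(ln (rho p) - ln rhoinf))
        - ((v1 p)\<^sup>2+(v2 p)\<^sup>2+(v3 p)\<^sup>2)*(1/temp p)/2,
      v1 p * (1/temp p), v2 p * (1/temp p), v3 p * (1/temp p), -(1/temp p)]"
proof -
  have pos: "rho p > 0" "temp p > 0" using assms(4) by (auto simp: admissible_def)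
  obtain g where gg: "\<gamma> = g + 1" "g \<noteq> 0" using assms(1) by (intro that[of "\<gamma> - 1"]) auto
  show ?thesis
    unfolding vec5_eq entvar_def thermo_entropy_def enthalpy_def cp_def vsq_def vector_5 gg(1)
    using pos gg(2) assms(2,3)
    by (simp add: ln_div field_simps)
qed

lemma U2_shuffle:
  assumes "Rg > 0" "\<gamma> > 1" "Tinf > 0" "rhoinf > 0" "admissible L" "admissible R"
  shows "(entvar Rg \<gamma> Tinf rhoinf L - entvar Rg \<gamma> Tinf rhoinf R) \<bullet> U2 Rg \<gamma> L R =
          (entvar Rg \<gamma> Tinf rhoinf L \<bullet> cons Rg \<gamma> L - math_entropy Rg \<gamma> Tinf rhoinf L)
        - (entvar Rg \<gamma> Tinf rhoinf R \<bullet> cons Rg \<gamma> R - math_entropy Rg \<gamma> Tinf rhoinf R)"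
proof -
  have pos: "rho L > 0" "rho R > 0" "1 / temp L > 0" "1 / temp R > 0" using assms(5,6) by (auto simp: admissible_def)
  have main: "(entvar Rg \<gamma> Tinf rhoinf L - entvar Rg \<gamma> Tinf rhoinf R) \<bullet> U2 Rg \<gamma> L R
     = Rg * (rho L - rho R)"
    unfolding entvar_Z2[OF assms(2-4,5)] entvar_Z2[OF assms(2-4,6)] U2_def Let_def amean_def sqmean_def
    apply (simp only: inner5 vector_minus_component vector_5)
    apply (rule U2_alg)
    using pos assms(2) by (auto intro: logmean_pos logmean_key)
  show ?thesis unfolding wu_S[OF assms(2-4,5)] wu_S[OF assms(2-4,6)] main by (simp add: algebra_simps)
qed

lemma logmean_same[simp]: "logmean a a = a" by (simp add: logmean_def)

lemma U1_sym: assumes "admissible L" "admissible R" shows "U1 Rg \<gamma> L R = U1 Rg \<gamma> R L"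
proof -
  have pos: "rho L * sqrt (temp L) > 0" "rho R * sqrt (temp R) > 0" "1 / sqrt (temp L) > 0" "1 / sqrt (temp R) > 0"
    using assms by (auto simp: admissible_def)
  have e1: "logmean (rho L * sqrt (temp L)) (rho R * sqrt (temp R)) = logmean (rho R * sqrt (temp R)) (rho L * sqrt (temp L))"
    using pos by (simp add: logmean_sym)
  have e2: "logmean (1 / sqrt (temp L)) (1 / sqrt (temp R)) = logmean (1 / sqrt (temp R)) (1 / sqrt (temp L))"
    using pos by (simp add: logmean_sym)
  show ?thesis unfolding U1_def Let_def amean_def e1 e2 by (simp add: algebra_simps)
qed

lemma U2_sym: assumes "admissible L" "admissible R" shows "U2 Rg \<gamma> L R = U2 Rg \<gamma> R L"
proof -
  have pos: "rho L > 0" "rho R > 0" "1 / temp L > 0" "1 / temp R > 0" using assms by (auto simp: admissible_def)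
  have e1: "logmean (rho L) (rho R) = logmean (rho R) (rho L)" using pos by (simp add: logmean_sym)
  have e2: "logmean (1 / temp L) (1 / temp R) = logmean (1 / temp R) (1 / temp L)" using pos by (simp add: logmean_sym)
  show ?thesis unfolding U2_def Let_def amean_def sqmean_def e1 e2 by (simp add: algebra_simps)
qed

lemma U1_cons: assumes "\<gamma> > 1" "admissible p" shows "U1 Rg \<gamma> p p = cons Rg \<gamma> p"
proof -
  have pos: "rho p > 0" "temp p > 0" using assms(2) by (auto simp: admissible_def)
  have s: "sqrt (temp p) > 0" "sqrt (temp p) * sqrt (temp p) = temp p" using pos by auto
  obtain g where gg: "\<gamma> = g + 1" "g \<noteq> 0" using assms(1) by (intro that[of "\<gamma> - 1"]) auto
  show ?thesis unfolding U1_def Let_def amean_def cons_def energy_def vsq_def vec5_eq vector_5 gg(1)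
    using pos s gg(2) by (simp add: field_simps power2_eq_square)
qed

lemma U2_cons: assumes "\<gamma> > 1" "admissible p" shows "U2 Rg \<gamma> p p = cons Rg \<gamma> p"
proof -
  have pos: "rho p > 0" "temp p > 0" using assms(2) by (auto simp: admissible_def)
  obtain g where gg: "\<gamma> = g + 1" "g \<noteq> 0" using assms(1) by (intro that[of "\<gamma> - 1"]) auto
  show ?thesis unfolding U2_def Let_def amean_def sqmean_def cons_def energy_def vsq_def vec5_eq vector_5 gg(1)
    using pos gg(2) by (simp add: field_simps power2_eq_square)
qed

theorem lemma5p1:
  fixes Rg \<gamma> Tinf rhoinf :: real
  assumes "Rg > 0" and "\<gamma> > 1" and "Tinf > 0" and "rhoinf > 0"
  shows "ec_properties Rg \<gamma> Tinf rhoinf (U1 Rg \<gamma>) \<and> ec_properties Rg \<gamma> Tinf rhoinf (U2 Rg \<gamma>)"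
  unfolding ec_properties_def
  using U1_sym U2_sym U1_cons[OF assms(2)] U2_cons[OF assms(2)] U1_shuffle[OF assms] U2_shuffle[OF assms]
  by blast
end
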